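(* For every $n\ge1$, \[G_n(x)=(n+(n-1)x)H_n(x)+(x+x^2)H_n'(x).\]
   Context: The polynomials are defined by $G_1=H_1=1$, $G_{n+1}(x)=(2n+nx)G_n(x)+(1+x)^2G_n'(x)$ and $H_{n+1}(x)=(2n-1+(n-1)x)H_n(x)+(1+x)^2H_n'(x)$. *)

theory Defs
  imports "HOL-Computational_Algebra.Polynomial"
begin

text \<open>G_1 = 1, G_{n+1}(x) = (2n + n x) G_n(x) + (1+x)^2 G_n'(x), for n \<ge> 1.
  Index 0 is unused (set to 0).\<close>
fun G :: "nat \<Rightarrow> int poly" where
  "G 0 = 0"
| "G (Suc 0) = 1"
| "G (Suc (Suc k)) =
     [: 2 * int (Suc k), int (Suc k) :] * G (Suc k) + [:1, 1:]^2 * pderiv (G (Suc k))"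

fun H :: "nat \<Rightarrow> int poly" where
  "H 0 = 0"
| "H (Suc 0) = 1"
| "H (Suc (Suc k)) =
     [: 2 * int (Suc k) - 1, int (Suc k) - 1 :] * H (Suc k) + [:1, 1:]^2 * pderiv (H (Suc k))"

end

theory Submission
  imports Defs
begin

lemma key:
  fixes f :: "int poly" and m :: int
  shows "[: m + 1, m :] * ([: 2 * m - 1, m - 1 :] * f + [:1, 1:]^2 * pderiv f)
           + [:0, 1, 1:] * pderiv ([: 2 * m - 1, m - 1 :] * f + [:1, 1:]^2 * pderiv f)
       = [: 2 * m, m :] * ([: m, m - 1 :] * f + [:0, 1, 1:] * pderiv f)
           + [:1, 1:]^2 * pderiv ([: m, m - 1 :] * f + [:0, 1, 1:] * pderiv f)" (is "?l = ?r")
proof -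
  have "poly (?l) x = poly (?r) x" for x
    by (simp add: pderiv_mult pderiv_add pderiv_pCons pderiv_smult power2_eq_square algebra_simps)
  then show ?thesis using poly_eq_poly_eq_iff by blast
qed

theorem mainTheorem8:
  fixes n :: nat
  assumes "n \<ge> 1"
  shows "G n = [: int n, int n - 1 :] * H n + [:0, 1, 1:] * pderiv (H n)"
  using assms
proof (induction n rule: G.induct)
  case 1 then show ?case by simp
next
  case 2 then show ?case by simp
next
  case (3 k)
  have IH: "G (Suc k) = [: int (Suc k), int (Suc k) - 1 :] * H (Suc k) + [:0, 1, 1:] * pderiv (H (Suc k))"
    using 3 by simp
  show ?case
    using key[of "int (Suc k)" "H (Suc k)"]
    by (simp only: G.simps H.simps IH) (simp add: algebra_simps)
qed

end
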